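(* Let $n\ge 4$. There is no 1-layer transformer with leftmost hard attention, rightmost hard attention, or average hard attention that performs function evaluation for domain $[n]$ in the "consecutive positions, permuted keys" presentation. This holds for any token embedding, position embedding, embedding dimension, MLP layers and unembedding. Here performing function evaluation means that, for every $f:[n]\to[n]$, every permutation $\pi$ of $[n]$ and every $i^*\in[n]$, the transformer outputs $f(i^* )$ on the input sequence $\pi(0),f(\pi(0)),\pi(1),f(\pi(1)),\dots,\pi(n-1),f(\pi(n-1)),i^*$.
   Context: Notation: $[n]=\{0,\dots,n-1\}$. Transformer model (encoder-only, no masking). A transformer consists of three parts. - An input embedding sends position $i$ with token $x_i$ to $\mathbf{w}(x_i)+\mathbf{p}(i)\in\mathbb{R}^d$. - One attention layer (possibly with residual connection) follows, together with any number of position-wise MLP layers. - The output is the index in $[n]$ maximizing $\mathbf{U}\mathbf{Y}[L-1]$, where $\mathbf{Y}[L-1]$ is the final vector at the last position and $\mathbf{U}\in\mathbb{R}^{n\times d}$. Attention computes the scores $s[i,j]=(\mathbf{W}^Q\mathbf{X}[i])\cdot(\mathbf{W}^K\mathbf{X}[j])/\sqrt{d_{hid}}$ and outputs $\sum_j\alpha[i,j]\mathbf{W}^V\mathbf{X}[j]$. Let $M_i$ be the set of $j$ maximizing $s[i,j]$. - Leftmost hard attention: $\alpha[i,j]=1$ iff $j=\min M_i$, and $0$ otherwise. - Rightmost hard attention: $\alpha[i,j]=1$ iff $j=\max M_i$, and $0$ otherwise. - Average hard attention: $\alpha[i,j]=1/|M_i|$ for $j\in M_i$, and $0$ otherwise.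 *)

theory Defs
  imports Complex_Main
begin

text \<open>Vectors in R^k are represented as functions nat => real (only the first k
  entries matter), matrices as functions nat => nat => real with explicit dimensions.\<close>

type_synonym vec = "nat \<Rightarrow> real"
type_synonym mat = "nat \<Rightarrow> nat \<Rightarrow> real"

definition dotp :: "nat \<Rightarrow> vec \<Rightarrow> vec \<Rightarrow> real" where
  "dotp k x y = (\<Sum>j<k. x j * y j)"

definition mulv :: "nat \<Rightarrow> mat \<Rightarrow> vec \<Rightarrow> vec" where
  "mulv k A x = (\<lambda>i. \<Sum>j<k. A i j * x j)"

definition relu :: "real \<Rightarrow> real" where
  "relu t = max 0 t"

text \<open>A position-wise MLP layer R^d -> R^d: (hidden width h, W1 (h x d), b1, W2 (d x h), b2),
  computing x |-> W2 relu(W1 x + b1) + b2.\<close>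
type_synonym mlp_layer = "nat \<times> mat \<times> vec \<times> mat \<times> vec"

definition apply_mlp :: "nat \<Rightarrow> mlp_layer \<Rightarrow> vec \<Rightarrow> vec" where
  "apply_mlp d l x = (case l of (h, W1, b1, W2, b2) \<Rightarrow>
     (\<lambda>i. (\<Sum>j<h. W2 i j * relu ((\<Sum>k<d. W1 j k * x k) + b1 j)) + b2 i))"

datatype attn_kind = Leftmost | Rightmost | Average

record transformer =
  dim :: nat
  dhid :: nat         \<comment> \<open>attention hidden dimension\<close>
  wemb :: "nat \<Rightarrow> vec"
  pemb :: "nat \<Rightarrow> vec"
  WQ :: mat           \<comment> \<open>dhid x d\<close>
  WK :: mat           \<comment> \<open>dhid x d\<close>
  WV :: mat           \<comment> \<open>d x d\<close>
  residual :: bool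
  mlps :: "mlp_layer list"
  Unemb :: mat        \<comment> \<open>n x d\<close>

definition emb :: "transformer \<Rightarrow> nat list \<Rightarrow> nat \<Rightarrow> vec" where
  "emb T xs i = (\<lambda>c. wemb T (xs ! i) c + pemb T i c)"

definition score :: "transformer \<Rightarrow> nat list \<Rightarrow> nat \<Rightarrow> nat \<Rightarrow> real" where
  "score T xs i j =
     dotp (dhid T) (mulv (dim T) (WQ T) (emb T xs i)) (mulv (dim T) (WK T) (emb T xs j))
     / sqrt (real (dhid T))"

definition maxset :: "transformer \<Rightarrow> nat list \<Rightarrow> nat \<Rightarrow> nat set" where
  "maxset T xs i = {j. j < length xs \<and> (\<forall>j'<length xs. score T xs i j' \<le> score T xs i j)}"

definition attn_out :: "attn_kind \<Rightarrow> transformer \<Rightarrow> nat list \<Rightarrow> nat \<Rightarrow> vec" where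
  "attn_out a T xs i =
     (let M = maxset T xs i; v = (\<lambda>j. mulv (dim T) (WV T) (emb T xs j)) in
      case a of
        Leftmost \<Rightarrow> v (Min M)
      | Rightmost \<Rightarrow> v (Max M)
      | Average \<Rightarrow> (\<lambda>c. (\<Sum>j\<in>M. v j c) / real (card M)))"

definition final_vec :: "attn_kind \<Rightarrow> transformer \<Rightarrow> nat list \<Rightarrow> vec" where
  "final_vec a T xs =
     (let i = length xs - 1;
          y0 = (\<lambda>c. (if residual T then emb T xs i c else 0) + attn_out a T xs i c)
      in foldl (\<lambda>y l. apply_mlp (dim T) l y) y0 (mlps T))"

definition outputs :: "attn_kind \<Rightarrow> nat \<Rightarrow> transformer \<Rightarrow> nat list \<Rightarrow> nat \<Rightarrow> bool" where
  "outputs a n T xs y =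
     (let z = mulv (dim T) (Unemb T) (final_vec a T xs) in
      y < n \<and> (\<forall>k<n. k \<noteq> y \<longrightarrow> z k < z y))"

definition fe_input :: "nat \<Rightarrow> (nat \<Rightarrow> nat) \<Rightarrow> (nat \<Rightarrow> nat) \<Rightarrow> nat \<Rightarrow> nat list" where
  "fe_input n f \<pi> istar = concat (map (\<lambda>k. [\<pi> k, f (\<pi> k)]) [0..<n]) @ [istar]"

definition performs_fe :: "attn_kind \<Rightarrow> nat \<Rightarrow> transformer \<Rightarrow> bool" where
  "performs_fe a n T =
     (\<forall>f \<pi> istar. (\<forall>x<n. f x < n) \<longrightarrow> bij_betw \<pi> {..<n} {..<n} \<longrightarrow> istar < n \<longrightarrow>
        outputs a n T (fe_input n f \<pi> istar) (f istar))"

end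

theory Submission
  imports Defs
begin


lemma cm_len: "length (concat (map (\<lambda>k. [\<pi> k, f (\<pi> k)]) [0..<m])) = 2*m"
  by (induction m) auto

lemma cm_nth:
  assumes "k < m"
  shows "concat (map (\<lambda>k. [\<pi> k, f (\<pi> k)]) [0..<m]) ! (2*k) = \<pi> k
       \<and> concat (map (\<lambda>k. [\<pi> k, f (\<pi> k)]) [0..<m]) ! (2*k+1) = f (\<pi> k)"
  using assms
proof (induction m)
  case 0 then show ?case by simp
next
  case (Suc m)
  show ?case
  proof (cases "k < m")
    case True
    then show ?thesis using Suc by (simp add: nth_append cm_len)
  next
    case False
    then have "k = m" using Suc by simp
    then show ?thesis by (simp add: nth_append cm_len)
  qed
qed

lemma fe_len: "length (fe_input n f \<pi> s) = 2*n+1"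
  by (simp add: fe_input_def cm_len)

lemma fe_key: "k < n \<Longrightarrow> fe_input n f \<pi> s ! (2*k) = \<pi> k"
  using cm_nth[of k n \<pi> f] by (simp add: fe_input_def nth_append cm_len)

lemma fe_val: "k < n \<Longrightarrow> fe_input n f \<pi> s ! (2*k+1) = f (\<pi> k)"
  using cm_nth[of k n \<pi> f] by (simp add: fe_input_def nth_append cm_len)

lemma fe_val_Suc: "k < n \<Longrightarrow> fe_input n f \<pi> s ! Suc (2*k) = f (\<pi> k)"
  using fe_val[of k n f \<pi> s] by simp

lemma fe_last: "fe_input n f \<pi> s ! (2*n) = s"
  by (simp add: fe_input_def nth_append cm_len)

lemma pos_cases: "(j::nat) < 2*n+1 \<Longrightarrow> j = 2*n \<or> (\<exists>k<n. j = 2*k) \<or> (\<exists>k<n. j = 2*k+1)"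
  by presburger

definition sc :: "transformer \<Rightarrow> vec \<Rightarrow> vec \<Rightarrow> real" where
  "sc T q k = dotp (dhid T) (mulv (dim T) (WQ T) q) (mulv (dim T) (WK T) k) / sqrt (real (dhid T))"

lemma mulv_add: "mulv d W (\<lambda>c. x c + y c) = (\<lambda>i. mulv d W x i + mulv d W y i)"
  by (simp add: mulv_def distrib_left sum.distrib)

lemma sc_add: "sc T q (\<lambda>c. x c + y c) = sc T q x + sc T q y"
  by (simp add: sc_def mulv_add dotp_def distrib_left sum.distrib add_divide_distrib)

lemma score_sc: "score T xs i j = sc T (emb T xs i) (emb T xs j)"
  by (simp add: score_def sc_def)

lemma score_split: "score T xs i j = sc T (emb T xs i) (wemb T (xs!j)) + sc T (emb T xs i) (pemb T j)"
  unfolding score_sc emb_def by (rule sc_add)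

definition Aq where "Aq T n t = sc T (\<lambda>c. wemb T 0 c + pemb T (2*n) c) (wemb T t)"
definition Bq where "Bq T n j = sc T (\<lambda>c. wemb T 0 c + pemb T (2*n) c) (pemb T j)"

lemma score_fe: "score T (fe_input n f \<pi> 0) (2*n) j = Aq T n (fe_input n f \<pi> 0 ! j) + Bq T n j"
  unfolding score_split Aq_def Bq_def by (simp add: emb_def fe_last)

lemma score_cong: "xs1!i = xs2!i \<Longrightarrow> xs1!j = xs2!j \<Longrightarrow> score T xs1 i j = score T xs2 i j"
  by (simp add: score_def emb_def)

lemma maxset_sub: "maxset T xs i \<subseteq> {..<length xs}"
  by (auto simp: maxset_def)

lemma maxset_ne: "length xs > 0 \<Longrightarrow> maxset T xs i \<noteq> {}"
proof -
  assume "length xs > 0"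
  let ?S = "score T xs i ` {..<length xs}"
  have "finite ?S" "?S \<noteq> {}" using \<open>length xs > 0\<close> by auto
  then have "Max ?S \<in> ?S" by (rule Max_in)
  then obtain j where j: "j < length xs" "score T xs i j = Max ?S" by auto
  have "\<forall>j'<length xs. score T xs i j' \<le> score T xs i j"
    using j \<open>finite ?S\<close> by auto
  then have "j \<in> maxset T xs i" using j by (simp add: maxset_def)
  then show ?thesis by auto
qed

lemma maxset_dom:
  assumes len: "length xs2 = length xs1"
    and eq: "\<And>j. j < length xs1 \<Longrightarrow> j \<noteq> p \<Longrightarrow> score T xs1 i j = score T xs2 i j"
    and q: "q < length xs1" "q \<noteq> p" "score T xs1 i p < score T xs1 i q" "score T xs2 i p < score T xs2 i q"
  shows "maxset T xs1 i = maxset T xs2 i \<and> p \<notin> maxset T xs1 i"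
proof -
  have pn: "p \<notin> maxset T xs1 i" using q by (auto simp: maxset_def)
  have "maxset T xs1 i \<subseteq> maxset T xs2 i"
  proof
    fix j assume j: "j \<in> maxset T xs1 i"
    then have jl: "j < length xs1" and jm: "\<forall>j'<length xs1. score T xs1 i j' \<le> score T xs1 i j"
      by (auto simp: maxset_def)
    have jp: "j \<noteq> p" using j pn by auto
    have "\<forall>j'<length xs2. score T xs2 i j' \<le> score T xs2 i j"
    proof (intro allI impI)
      fix j' assume "j' < length xs2"
      then show "score T xs2 i j' \<le> score T xs2 i j"
        using eq[of j'] eq[of j] eq[of q] jm q jl jp len
        by (cases "j' = p") fastforce+
    qed
    then show "j \<in> maxset T xs2 i" using jl len by (simp add: maxset_def)
  qed
  moreover have "maxset T xs2 i \<subseteq> maxset T xs1 i"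
  proof
    fix j assume j: "j \<in> maxset T xs2 i"
    then have jl: "j < length xs1" and jm: "\<forall>j'<length xs1. score T xs2 i j' \<le> score T xs2 i j"
      using len by (auto simp: maxset_def)
    have jp: "j \<noteq> p" using j q len by (auto simp: maxset_def)
    have "\<forall>j'<length xs1. score T xs1 i j' \<le> score T xs1 i j"
    proof (intro allI impI)
      fix j' assume "j' < length xs1"
      then show "score T xs1 i j' \<le> score T xs1 i j"
        using eq[of j'] eq[of j] eq[of q] jm q jl jp len
        by (cases "j' = p") fastforce+
    qed
    then show "j \<in> maxset T xs1 i" using jl by (simp add: maxset_def)
  qed
  ultimately show ?thesis using pn by auto
qed

lemma attn_eq_tokens:
  assumes "length xs1 = length xs2" "length xs1 > 0"
    and M: "maxset T xs1 i = maxset T xs2 i"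
    and tok: "\<And>j. j \<in> maxset T xs1 i \<Longrightarrow> xs1!j = xs2!j"
  shows "attn_out a T xs1 i = attn_out a T xs2 i"
proof -
  let ?M = "maxset T xs1 i"
  have ne: "?M \<noteq> {}" using maxset_ne[of xs1 T i] assms(2) by simp
  have fin: "finite ?M" using finite_subset[OF maxset_sub[of T xs1 i]] by simp
  have v: "\<And>j. j \<in> ?M \<Longrightarrow> emb T xs1 j = emb T xs2 j" using tok by (simp add: emb_def)
  have "Min ?M \<in> ?M" "Max ?M \<in> ?M" using ne fin by auto
  then have mi: "Min ?M \<in> ?M" and ma: "Max ?M \<in> ?M" by auto
  show ?thesis
  proof (cases a)
    case Leftmost then show ?thesis using v[OF mi] M by (simp add: attn_out_def Let_def)
  next
    case Rightmost then show ?thesis using v[OF ma] M by (simp add: attn_out_def Let_def)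
  next
    case Average
    have "(\<Sum>j\<in>?M. mulv (dim T) (WV T) (emb T xs1 j) c) = (\<Sum>j\<in>?M. mulv (dim T) (WV T) (emb T xs2 j) c)" for c
      by (rule sum.cong) (simp_all add: v)
    then show ?thesis using M Average by (simp add: attn_out_def Let_def)
  qed
qed

lemma final_eq:
  assumes "length xs1 = length xs2" "xs1 ! (length xs1 - 1) = xs2 ! (length xs1 - 1)"
    "attn_out a T xs1 (length xs1 - 1) = attn_out a T xs2 (length xs1 - 1)"
  shows "final_vec a T xs1 = final_vec a T xs2"
proof -
  have "emb T xs1 (length xs1 - 1) = emb T xs2 (length xs1 - 1)"
    using assms by (simp add: emb_def)
  then show ?thesis using assms unfolding final_vec_def Let_def assms(1)[symmetric] by (simp only:)
qed

lemma outputs_unique: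
  assumes "outputs a n T xs1 y1" "outputs a n T xs2 y2" "final_vec a T xs1 = final_vec a T xs2"
  shows "y1 = y2"
proof (rule ccontr)
  assume ne: "y1 \<noteq> y2"
  let ?z1 = "mulv (dim T) (Unemb T) (final_vec a T xs1)"
  have a1: "y1 < n" "\<forall>k<n. k \<noteq> y1 \<longrightarrow> ?z1 k < ?z1 y1"
    using assms(1) unfolding outputs_def Let_def by auto
  have a2: "y2 < n" "\<forall>k<n. k \<noteq> y2 \<longrightarrow> ?z1 k < ?z1 y2"
    using assms(2) unfolding outputs_def Let_def assms(3)[symmetric] by auto
  have "?z1 y2 < ?z1 y1" using a1 a2 ne by auto
  moreover have "?z1 y1 < ?z1 y2" using a1 a2 ne by auto
  ultimately show False by simp
qed

definition swp :: "nat \<Rightarrow> nat \<Rightarrow> nat \<Rightarrow> nat" where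
  "swp x y k = (if k = x then y else if k = y then x else k)"

lemma bij_swp: "x < n \<Longrightarrow> y < n \<Longrightarrow> bij_betw (swp x y) {..<n} {..<n}"
  by (rule bij_betw_byWitness[where f'="swp x y"]) (auto simp: swp_def)

lemma ex_argmax: "\<exists>t<Suc m. \<forall>u<Suc m. (g::nat\<Rightarrow>real) u \<le> g t"
proof (induction m)
  case 0 then show ?case by auto
next
  case (Suc m)
  then obtain t where t: "t < Suc m" "\<forall>u<Suc m. g u \<le> g t" by auto
  show ?case
  proof (cases "g (Suc m) \<le> g t")
    case True
    then show ?thesis using t by (intro exI[of _ t]) (auto simp: less_Suc_eq)
  next
    case False
    then show ?thesis using t by (intro exI[of _ "Suc m"]) (auto simp: less_Suc_eq)
  qed
qed



lemma no_strict:
  assumes pf: "performs_fe a n T"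
    and k: "k0 < n" "k1 < n" "k0 \<noteq> k1" and t: "t < n" and u: "u < n" "u' < n" "u \<noteq> u'"
    and h1: "Aq T n u + Bq T n (2*k0+1) < Aq T n t + Bq T n (2*k1+1)"
    and h2: "Aq T n u' + Bq T n (2*k0+1) < Aq T n t + Bq T n (2*k1+1)"
  shows False
proof -
  define \<pi> where "\<pi> = swp 0 k0"
  define f1 where "f1 = (\<lambda>x::nat. if x = 0 then u else t)"
  define f2 where "f2 = (\<lambda>x::nat. if x = 0 then u' else t)"
  define xs1 where "xs1 = fe_input n f1 \<pi> 0"
  define xs2 where "xs2 = fe_input n f2 \<pi> 0"
  have bij: "bij_betw \<pi> {..<n} {..<n}" unfolding \<pi>_def using k by (intro bij_swp) auto
  have pi0: "\<And>k. \<pi> k = 0 \<longleftrightarrow> k = k0" by (auto simp: \<pi>_def swp_def)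
  have n0: "0 < n" using k by auto
  have "\<forall>x<n. f1 x < n" "\<forall>x<n. f2 x < n" using t u by (auto simp: f1_def f2_def)
  then have o1: "outputs a n T xs1 (f1 0)" and o2: "outputs a n T xs2 (f2 0)"
    using pf[unfolded performs_fe_def, rule_format, OF _ bij n0] unfolding xs1_def xs2_def by auto
  have len: "length xs1 = 2*n+1" "length xs2 = 2*n+1" by (simp_all add: xs1_def xs2_def fe_len)
  have tokeq: "xs1 ! j = xs2 ! j" if "j < 2*n+1" "j \<noteq> 2*k0+1" for j
    using pos_cases[OF that(1)]
  proof (elim disjE exE conjE)
    assume "j = 2*n" then show ?thesis by (simp add: xs1_def xs2_def fe_last)
  next
    fix k assume "k < n" "j = 2*k" then show ?thesis by (simp add: xs1_def xs2_def fe_key)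
  next
    fix k assume "k < n" "j = 2*k+1"
    then have "k \<noteq> k0" using that by auto
    then have "\<pi> k \<noteq> 0" using pi0 by auto
    then show ?thesis using \<open>j = 2*k+1\<close> fe_val[OF \<open>k < n\<close>, of f1 \<pi> 0] fe_val[OF \<open>k < n\<close>, of f2 \<pi> 0]
      by (simp add: xs1_def xs2_def f1_def f2_def del: fe_val)
  qed
  have p1: "xs1 ! (2*k0+1) = u" using k pi0 by (simp add: xs1_def fe_val_Suc f1_def)
  have p2: "xs2 ! (2*k0+1) = u'" using k pi0 by (simp add: xs2_def fe_val_Suc f2_def)
  have q1: "xs1 ! (2*k1+1) = t" using k pi0 by (simp add: xs1_def fe_val_Suc f1_def)
  have q2: "xs2 ! (2*k1+1) = t" using k pi0 by (simp add: xs2_def fe_val_Suc f2_def)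
  have last: "xs1 ! (2*n) = xs2 ! (2*n)" by (simp add: xs1_def xs2_def fe_last)
  have D: "maxset T xs1 (2*n) = maxset T xs2 (2*n) \<and> 2*k0+1 \<notin> maxset T xs1 (2*n)"
  proof (rule maxset_dom[where q="2*k1+1"])
    show "length xs2 = length xs1" using len by simp
    show "score T xs1 (2*n) j = score T xs2 (2*n) j" if "j < length xs1" "j \<noteq> 2*k0+1" for j
      using that tokeq last len by (intro score_cong) auto
    show "2*k1+1 < length xs1" using k len by simp
    show "2*k1+1 \<noteq> 2*k0+1" using k by simp
    show "score T xs1 (2*n) (2*k0+1) < score T xs1 (2*n) (2*k1+1)"
      unfolding xs1_def score_fe using p1 q1 h1 by (simp add: xs1_def)
    show "score T xs2 (2*n) (2*k0+1) < score T xs2 (2*n) (2*k1+1)"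
      unfolding xs2_def score_fe using p2 q2 h2 by (simp add: xs2_def)
  qed
  have "attn_out a T xs1 (2*n) = attn_out a T xs2 (2*n)"
  proof (rule attn_eq_tokens)
    show "length xs1 = length xs2" "0 < length xs1" using len by auto
    show "maxset T xs1 (2*n) = maxset T xs2 (2*n)" using D by simp
    show "xs1 ! j = xs2 ! j" if "j \<in> maxset T xs1 (2*n)" for j
      using that D maxset_sub[of T xs1 "2*n"] len by (intro tokeq) auto
  qed
  then have "final_vec a T xs1 = final_vec a T xs2"
    using len last by (intro final_eq) auto
  then have "f1 0 = f2 0" using outputs_unique[OF o1 o2] by simp
  then show False using u by (simp add: f1_def f2_def)
qed



lemma maxset_eqscore:
  "j < length xs \<Longrightarrow> j' < length xs \<Longrightarrow> score T xs i j = score T xs i j' \<Longrightarrow>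
   j \<in> maxset T xs i \<longleftrightarrow> j' \<in> maxset T xs i"
  by (auto simp: maxset_def)

lemma v_split: "mulv d W (emb T xs j) c = mulv d W (wemb T (xs!j)) c + mulv d W (pemb T j) c"
  unfolding emb_def mulv_add by simp

lemma no_swap:
  assumes pf: "performs_fe a n T" and n4: "n \<ge> 4"
    and u: "u < n" "u' < n" "u \<noteq> u'" and A: "Aq T n u = Aq T n u'"
    and B: "Bq T n 3 = Bq T n 1" "Bq T n 5 = Bq T n 1" "Bq T n (2*n-1) = Bq T n 1"
  shows False
proof -
  define \<pi> where "\<pi> = swp 0 1"
  define f1 where "f1 = (\<lambda>x::nat. if x = 2 then u' else u)"
  define f2 where "f2 = (\<lambda>x::nat. if x = 0 then u' else u)"
  define xs1 where "xs1 = fe_input n f1 \<pi> 0"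
  define xs2 where "xs2 = fe_input n f2 \<pi> 0"
  have bij: "bij_betw \<pi> {..<n} {..<n}" unfolding \<pi>_def using n4 by (intro bij_swp) auto
  have n0: "0 < n" using n4 by auto
  have "\<forall>x<n. f1 x < n" "\<forall>x<n. f2 x < n" using u by (auto simp: f1_def f2_def)
  then have o1: "outputs a n T xs1 (f1 0)" and o2: "outputs a n T xs2 (f2 0)"
    using pf[unfolded performs_fe_def, rule_format, OF _ bij n0] unfolding xs1_def xs2_def by auto
  have len: "length xs1 = 2*n+1" "length xs2 = 2*n+1" by (simp_all add: xs1_def xs2_def fe_len)
  have tokeq: "xs1 ! j = xs2 ! j" if "j < 2*n+1" "j \<noteq> 3" "j \<noteq> 5" for j
    using pos_cases[OF that(1)]
  proof (elim disjE exE conjE)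
    assume "j = 2*n" then show ?thesis by (simp add: xs1_def xs2_def fe_last)
  next
    fix k assume "k < n" "j = 2*k" then show ?thesis by (simp add: xs1_def xs2_def fe_key)
  next
    fix k assume "k < n" "j = 2*k+1"
    then have "k \<noteq> 1" "k \<noteq> 2" using that by auto
    then have "\<pi> k \<noteq> 0" "\<pi> k \<noteq> 2" by (auto simp: \<pi>_def swp_def)
    then show ?thesis using \<open>j = 2*k+1\<close> fe_val[OF \<open>k < n\<close>, of f1 \<pi> 0] fe_val[OF \<open>k < n\<close>, of f2 \<pi> 0]
      by (simp add: xs1_def xs2_def f1_def f2_def del: fe_val)
  qed
  have val: "xs ! (2*k+1) = f (\<pi> k)" if "xs = fe_input n f \<pi> 0" "k < n" for xs f k
    using that fe_val by simp
  have t1: "xs1 ! 1 = u" "xs2 ! 1 = u" using val[of xs1 f1 0] val[of xs2 f2 0] n0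
    by (auto simp: xs1_def xs2_def f1_def f2_def \<pi>_def swp_def)
  have t3: "xs1 ! 3 = u" "xs2 ! 3 = u'" using val[of xs1 f1 1] val[of xs2 f2 1] n4
    by (auto simp: xs1_def xs2_def f1_def f2_def \<pi>_def swp_def)
  have t5: "xs1 ! 5 = u'" "xs2 ! 5 = u" using val[of xs1 f1 2] val[of xs2 f2 2] n4
    by (auto simp: xs1_def xs2_def f1_def f2_def \<pi>_def swp_def)
  have "xs1 ! (2*(n-1)+1) = f1 (\<pi> (n-1))" "xs2 ! (2*(n-1)+1) = f2 (\<pi> (n-1))"
    using val[of xs1 f1 "n-1"] val[of xs2 f2 "n-1"] n4 by (auto simp: xs1_def xs2_def)
  moreover have "2*(n-1)+1 = 2*n-1" using n4 by simp
  ultimately have tl: "xs1 ! (2*n-1) = u" "xs2 ! (2*n-1) = u" using n4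
    by (auto simp: f1_def f2_def \<pi>_def swp_def)
  have last: "xs1 ! (2*n) = xs2 ! (2*n)" by (simp add: xs1_def xs2_def fe_last)
  have sc1: "score T xs1 (2*n) j = Aq T n (xs1 ! j) + Bq T n j" for j
    unfolding xs1_def by (rule score_fe)
  have sc2: "score T xs2 (2*n) j = Aq T n (xs2 ! j) + Bq T n j" for j
    unfolding xs2_def by (rule score_fe)
  have sceq: "score T xs1 (2*n) j = score T xs2 (2*n) j" if "j < 2*n+1" for j
  proof -
    have "Aq T n (xs1 ! j) = Aq T n (xs2 ! j)"
      using tokeq[OF that] t3 t5 A by (cases "j = 3"; cases "j = 5") auto
    then show ?thesis using sc1 sc2 by simp
  qed
  define M where "M = maxset T xs1 (2*n)"
  have M2: "maxset T xs2 (2*n) = M" unfolding M_def maxset_def using sceq len by auto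
  have Msub: "M \<subseteq> {..<2*n+1}" using maxset_sub[of T xs1 "2*n"] len by (simp add: M_def)
  have fin: "finite M" using finite_subset[OF Msub] by simp
  have ne: "M \<noteq> {}" using maxset_ne[of xs1 T "2*n"] len by (simp add: M_def)
  have s13: "score T xs1 (2*n) 3 = score T xs1 (2*n) 1"
    using sc1 t1 t3 B by simp
  have s15: "score T xs1 (2*n) 5 = score T xs1 (2*n) 1"
    using sc1 t1 t5 B A by simp
  have s1l: "score T xs1 (2*n) (2*n-1) = score T xs1 (2*n) 1"
    using sc1 t1 tl B by simp
  have m35: "3 \<in> M \<longleftrightarrow> 5 \<in> M" "3 \<in> M \<longleftrightarrow> 1 \<in> M" "3 \<in> M \<longleftrightarrow> 2*n-1 \<in> M"
  proof -
    have l: "3 < length xs1" "5 < length xs1" "1 < length xs1" "2*n-1 < length xs1"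
      using len n4 by auto
    show "3 \<in> M \<longleftrightarrow> 5 \<in> M" unfolding M_def
      using maxset_eqscore[OF l(1) l(2)] s13 s15 by simp
    show "3 \<in> M \<longleftrightarrow> 1 \<in> M" unfolding M_def
      using maxset_eqscore[OF l(1) l(3)] s13 by simp
    show "3 \<in> M \<longleftrightarrow> 2*n-1 \<in> M" unfolding M_def
      using maxset_eqscore[OF l(1) l(4)] s13 s1l by simp
  qed
  have vEq: "mulv (dim T) (WV T) (emb T xs1 j) = mulv (dim T) (WV T) (emb T xs2 j)"
    if "j \<in> M" "j \<noteq> 3" "j \<noteq> 5" for j
    using tokeq[of j] that Msub by (auto simp: emb_def)
  have "attn_out a T xs1 (2*n) = attn_out a T xs2 (2*n)"
  proof (cases a)
    case Leftmost
    have mi: "Min M \<in> M" using fin ne by simp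
    have "Min M \<noteq> 3 \<and> Min M \<noteq> 5"
    proof (rule ccontr)
      assume nt: "\<not> ?thesis"
      then have "3 \<in> M" using mi m35 by auto
      then have "1 \<in> M" using m35 by simp
      then have "Min M \<le> 1" using fin by simp
      then show False using nt by auto
    qed
    then show ?thesis using Leftmost vEq[OF mi] M2
      unfolding attn_out_def Let_def M_def by simp
  next
    case Rightmost
    have mi: "Max M \<in> M" using fin ne by simp
    have "Max M \<noteq> 3 \<and> Max M \<noteq> 5"
    proof (rule ccontr)
      assume nt: "\<not> ?thesis"
      then have "3 \<in> M" using mi m35 by auto
      then have "2*n-1 \<in> M" using m35 by simp
      then have "2*n-1 \<le> Max M" using fin by simp
      then show False using nt n4 by auto
    qed
    then show ?thesis using Rightmost vEq[OF mi] M2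
      unfolding attn_out_def Let_def M_def by simp
  next
    case Average
    have "(\<Sum>j\<in>M. mulv (dim T) (WV T) (emb T xs1 j) c) = (\<Sum>j\<in>M. mulv (dim T) (WV T) (emb T xs2 j) c)"
      for c
    proof (cases "3 \<in> M")
      case False
      then have "5 \<notin> M" using m35 by simp
      then have "j \<in> M \<Longrightarrow> mulv (dim T) (WV T) (emb T xs1 j) = mulv (dim T) (WV T) (emb T xs2 j)" for j
        using False vEq[of j] by auto
      then show ?thesis by (intro sum.cong) auto
    next
      case True
      then have T5: "5 \<in> M" using m35 by simp
      let ?g = "\<lambda>xs j. mulv (dim T) (WV T) (emb T xs j) c"
      have split: "sum (?g xs) M = ?g xs 3 + ?g xs 5 + sum (?g xs) (M - {3} - {5})" for xs
      proof -
        have "sum (?g xs) M = ?g xs 3 + sum (?g xs) (M - {3})"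
          by (rule sum.remove[OF fin True])
        moreover have "sum (?g xs) (M - {3}) = ?g xs 5 + sum (?g xs) (M - {3} - {5})"
          using T5 fin by (intro sum.remove) auto
        ultimately show ?thesis by simp
      qed
      have "?g xs1 3 + ?g xs1 5 = ?g xs2 3 + ?g xs2 5"
        unfolding v_split using t3 t5 by simp
      moreover have "sum (?g xs1) (M - {3} - {5}) = sum (?g xs2) (M - {3} - {5})"
        by (intro sum.cong) (auto simp: vEq)
      ultimately show ?thesis using split[of xs1] split[of xs2] by simp
    qed
    then show ?thesis using Average M2 unfolding attn_out_def Let_def M_def by simp
  qed
  then have "final_vec a T xs1 = final_vec a T xs2"
    using len last by (intro final_eq) auto
  then have "f1 0 = f2 0" using outputs_unique[OF o1 o2] by simp
  then show False using u by (simp add: f1_def f2_def)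
qed



theorem theorem6:
  fixes n :: nat and a :: attn_kind
  assumes "n \<ge> 4"
  shows "\<not> (\<exists>T. performs_fe a n T)"
proof
  assume "\<exists>T. performs_fe a n T"
  then obtain T where pf: "performs_fe a n T" by blast
  have n4: "n \<ge> 4" by (rule assms)
  obtain m where nm: "n = Suc m" using n4 by (cases n) auto
  obtain t where t: "t < n" "\<forall>u<n. Aq T n u \<le> Aq T n t"
    using ex_argmax[of m "Aq T n"] nm by auto
  show False
  proof (cases "\<exists>k0<n. \<exists>k1<n. Bq T n (2*k0+1) < Bq T n (2*k1+1)")
    case True
    then obtain k0 k1 where k: "k0 < n" "k1 < n" "Bq T n (2*k0+1) < Bq T n (2*k1+1)" by blast
    show False
      apply (rule no_strict[OF pf k(1,2) _ t(1), of 0 1])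
      using k t n4 by (auto intro: add_le_less_mono)
  next
    case False
    then have Beq: "Bq T n (2*k0+1) = Bq T n (2*k1+1)" if "k0 < n" "k1 < n" for k0 k1
      using that by (meson linorder_neqE_linordered_idom)
    have B: "Bq T n 3 = Bq T n 1" "Bq T n 5 = Bq T n 1" "Bq T n (2*n-1) = Bq T n 1"
      using Beq[of 1 0] Beq[of 2 0] Beq[of "n-1" 0] n4 \<open>n = Suc m\<close> by simp_all
    show False
    proof (cases "\<exists>u<n. \<exists>u'<n. u \<noteq> u' \<and> Aq T n u = Aq T n u'")
      case True
      then obtain u u' where "u < n" "u' < n" "u \<noteq> u'" "Aq T n u = Aq T n u'" by blast
      then show False using no_swap[OF pf n4 _ _ _ _ B] by blast
    next
      case False
      obtain u u' where uu: "u < 3" "u' < 3" "u \<noteq> t" "u' \<noteq> t" "u \<noteq> u'"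
      proof (cases "t = 0")
        case True then show ?thesis using that[of 1 2] by auto
      next
        case f0: False
        show ?thesis
        proof (cases "t = 1")
          case True then show ?thesis using that[of 0 2] by auto
        next
          case False then show ?thesis using that[of 0 1] f0 by auto
        qed
      qed
      have lt: "Aq T n v < Aq T n t" if "v < n" "v \<noteq> t" for v
        using t False that by (metis order_le_less)
      show False
        apply (rule no_strict[OF pf _ _ _ t(1), of 0 1 u u'])
        using uu n4 lt[of u] lt[of u'] Beq[of 0 1] by auto
    qed
  qed
qed

end
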